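(* Let $D$ be any tangle diagram and let $i\mapsto(g_i,L_i)$ be any decorated $\mathrm{SL}_2(\mathbb{C})$-coloring of $D$, corresponding to a decorated representation $\rho$. Then there exist $h\in\mathrm{SL}_2(\mathbb{C})$ and a shadow coloring $j\mapsto u_j$ of the conjugated decorated coloring $i\mapsto(h^{-1}g_ih,\,L_ih)$ such that the resulting decorated shadow coloring is admissible.
   Context: Tangle diagrams: a tangle diagram $D$ is an oriented tangle diagram in the square $[0,1]^2$, drawn with strands running from left to right, and viewed as a 4-valent graph with over/under information at each crossing. Segments are the edges of this graph; a strand is cut at every crossing, whether it passes over or under there. Regions are the connected components of the complement of the graph in the square. Above and below: for a segment $i$, $i^{\uparrow}$ is the region on the left of $i$ with respect to its orientation and $i^{\downarrow}$ the region on its right. Crossing labels: rotate a crossing so that both strands point to the right. The incoming segments are $1$ (upper left) and $2$ (lower left). The outgoing segments are $1'$ (lower right, continuing $1$) and $2'$ (upper right, continuing $2$). The crossing is positive if strand $1\to1'$ is over and negative if strand $2\to2'$ is over. Decorated $\mathrm{SL}_2(\mathbb{C})$-coloring: assign to each segment $i$ a matrix $g_i\in\mathrm{SL}_2(\mathbb{C})$ and a line $L_i\subset\mathbb{C}^2$ of row vectors with $L_ig_i=L_i$, such that: - at positive crossings, $g_{1'}=g_1$, $g_{2'}=g_1^{-1}g_2g_1$, $L_{1'}=L_1$ and $L_{2'}=L_2g_1$; - at negative crossings, $g_{2'}=g_2$, $g_{1'}=g_2g_1g_2^{-1}$, $L_{2'}=L_2$ and $L_{1'}=L_1g_2^{-1}$.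 Such colorings are equivalent to decorated representations of the Wirtinger presentation of the tangle group, i.e. representations $\rho$ into $\mathrm{SL}_2(\mathbb{C})$ together with a choice of invariant line for the meridians. Shadow coloring: assign a nonzero column vector $u_j\in\mathbb{C}^2$ to each region with $u_{i^{\downarrow}}=g_iu_{i^{\uparrow}}$ for every segment $i$. Admissibility: with $e_2=(0,1)^T$ and nonzero $v_i\in L_i$, the decorated shadow coloring is admissible if $\det(u_j,e_2)\ne0$ for every region $j$ and $v_ie_2\neq0$, $v_iu_{i^{\uparrow}}\neq0$ for every segment $i$. Here $\det(x,y)$ is the determinant of the matrix with columns $x,y$. *)

theory Defs
  imports "HOL-Analysis.Analysis"
begin

text \<open>Linear algebra: 2x2 complex matrices act on column vectors (complex^2) from the
left and on row vectors (also complex^2) from the right.\<close>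

type_synonym mat2 = "complex^2^2"
type_synonym vec2 = "complex^2"

definition SL2 :: "mat2 set" where
  "SL2 = {g. det g = 1}"

definition is_line :: "vec2 set \<Rightarrow> bool" where
  "is_line L \<longleftrightarrow> (\<exists>v. v \<noteq> 0 \<and> L = {c *s v | c. True})"

definition line_act :: "vec2 set \<Rightarrow> mat2 \<Rightarrow> vec2 set" where
  "line_act L g = (\<lambda>v. v v* g) ` L"

definition pair :: "vec2 \<Rightarrow> vec2 \<Rightarrow> complex" where
  "pair v u = (\<Sum>i\<in>UNIV. v $ i * u $ i)"

definition e2 :: vec2 where
  "e2 = vector [0, 1]"

definition det_cols :: "vec2 \<Rightarrow> vec2 \<Rightarrow> complex" where
  "det_cols x y = det (\<chi> i j. if j = 1 then x $ i else y $ i)"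

text \<open>A tangle diagram in [0,1]^2 (strands ending on the left and right edges) is
encoded, up to planar isotopy, by its Morse decomposition in the horizontal (x) direction:
a list of boundary orientations on the left edge and a word of elementary events.
At each generic vertical level the diagram meets a vertical line in n points, indexed
0..n-1 from bottom to top; each carries an orientation (True = pointing right,
False = pointing left).  The gaps (regions met by the vertical line) are indexed
0..n, gap j lying between point j-1 and point j (gap 0 at the bottom, gap n at the top).

Events:
 \<^item> Xing k aover: points k and k+1 cross; strand A goes from left point k to right point
   k+1, strand B from left point k+1 to right point k; aover says whether A is the
   over-strand.
 \<^item> Birth k ob: two new points are created at positions k, k+1 (a local minimum in x,
   an arc opening to the right), with orientations ob and (not ob).
 \<^item> Death k: points k and k+1 (of opposite orientation) are joined by an arc and
   disappear (a local maximum in x).\<close>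

datatype elem = Xing nat bool | Birth nat bool | Death nat

fun step :: "bool list \<Rightarrow> elem \<Rightarrow> bool list" where
  "step os (Xing k ov) = os[k := os ! (k+1), k+1 := os ! k]"
| "step os (Birth k ob) = take k os @ [ob, \<not> ob] @ drop k os"
| "step os (Death k) = take k os @ drop (k+2) os"

fun valid_elem :: "bool list \<Rightarrow> elem \<Rightarrow> bool" where
  "valid_elem os (Xing k ov) = (k + 1 < length os)"
| "valid_elem os (Birth k ob) = (k \<le> length os)"
| "valid_elem os (Death k) = (k + 1 < length os \<and> os ! k \<noteq> os ! (k+1))"

text \<open>Orientations of the points at level t (level t lies between event t-1 and event t;
levels are 0..length w).\<close>
definition ori :: "bool list \<Rightarrow> elem list \<Rightarrow> nat \<Rightarrow> bool list" where
  "ori os0 w t = foldl step os0 (take t w)"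

definition wf_diagram :: "bool list \<Rightarrow> elem list \<Rightarrow> bool" where
  "wf_diagram os0 w \<longleftrightarrow> (\<forall>t<length w. valid_elem (ori os0 w t) (w ! t))"

text \<open>Segments are represented by their intersection points (t,p) with the levels
(every segment meets some level); data on segments is given as functions of (t,p)
that are constant along each segment (enforced by the transition conditions below).
Similarly regions are represented by the gaps (t,j).

Above/below: for a point p oriented to the right, the region on its left is the gap
above it (p+1); for a point oriented to the left, it is the gap below it (p).\<close>

definition up_gap :: "bool list \<Rightarrow> nat \<Rightarrow> nat" where
  "up_gap os p = (if os ! p then p + 1 else p)"

definition down_gap :: "bool list \<Rightarrow> nat \<Rightarrow> nat" where
  "down_gap os p = (if os ! p then p else p + 1)"

text \<open>Crossing labels (1, 2, 1', 2') at a crossing between level t and t+1 at points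
k,k+1, where a, b are the orientations of strands A and B (obtained by rotating the
crossing so that both strands point right).\<close>
definition xing_segs :: "nat \<Rightarrow> nat \<Rightarrow> bool \<Rightarrow> bool \<Rightarrow>
    (nat \<times> nat) \<times> (nat \<times> nat) \<times> (nat \<times> nat) \<times> (nat \<times> nat)" where
  "xing_segs t k a b =
    (if a \<and> b then ((t, k+1), (t, k), (t+1, k), (t+1, k+1))
     else if \<not> a \<and> \<not> b then ((t+1, k), (t+1, k+1), (t, k+1), (t, k))
     else if a then ((t, k), (t+1, k), (t+1, k+1), (t, k+1))
     else ((t+1, k+1), (t, k+1), (t, k), (t+1, k)))"

text \<open>The crossing is positive iff strand 1 -> 1' is the over-strand; strand 1 is B
when a = b and A otherwise.\<close>
definition xing_positive :: "bool \<Rightarrow> bool \<Rightarrow> bool \<Rightarrow> bool" where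
  "xing_positive a b aover = (if a = b then \<not> aover else aover)"

fun event_ok :: "bool list \<Rightarrow> nat \<Rightarrow> elem \<Rightarrow> (nat \<times> nat \<Rightarrow> mat2) \<Rightarrow>
    (nat \<times> nat \<Rightarrow> vec2 set) \<Rightarrow> bool" where
  "event_ok os t (Xing k ov) G L =
     ((\<forall>p<length os. p \<noteq> k \<and> p \<noteq> k + 1 \<longrightarrow> G (t+1, p) = G (t, p) \<and> L (t+1, p) = L (t, p)) \<and>
      (case xing_segs t k (os ! k) (os ! (k+1)) of (s1, s2, s1', s2') \<Rightarrow>
        (if xing_positive (os ! k) (os ! (k+1)) ov
         then G s1' = G s1 \<and> G s2' = matrix_inv (G s1) ** G s2 ** G s1 \<and>
              L s1' = L s1 \<and> L s2' = line_act (L s2) (G s1)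
         else G s2' = G s2 \<and> G s1' = G s2 ** G s1 ** matrix_inv (G s2) \<and>
              L s2' = L s2 \<and> L s1' = line_act (L s1) (matrix_inv (G s2)))))"
| "event_ok os t (Birth k ob) G L =
     ((\<forall>p<length os. (p < k \<longrightarrow> G (t+1, p) = G (t, p) \<and> L (t+1, p) = L (t, p)) \<and>
                     (k \<le> p \<longrightarrow> G (t+1, p+2) = G (t, p) \<and> L (t+1, p+2) = L (t, p))) \<and>
      G (t+1, k) = G (t+1, k+1) \<and> L (t+1, k) = L (t+1, k+1))"
| "event_ok os t (Death k) G L =
     ((\<forall>p<length os. (p < k \<longrightarrow> G (t+1, p) = G (t, p) \<and> L (t+1, p) = L (t, p)) \<and>
                     (k + 2 \<le> p \<longrightarrow> G (t+1, p-2) = G (t, p) \<and> L (t+1, p-2) = L (t, p))) \<and>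
      G (t, k) = G (t, k+1) \<and> L (t, k) = L (t, k+1))"

definition decorated_coloring :: "bool list \<Rightarrow> elem list \<Rightarrow> (nat \<times> nat \<Rightarrow> mat2) \<Rightarrow>
    (nat \<times> nat \<Rightarrow> vec2 set) \<Rightarrow> bool" where
  "decorated_coloring os0 w G L \<longleftrightarrow>
     (\<forall>t\<le>length w. \<forall>p<length (ori os0 w t).
        G (t, p) \<in> SL2 \<and> is_line (L (t, p)) \<and> line_act (L (t, p)) (G (t, p)) = L (t, p)) \<and>
     (\<forall>t<length w. event_ok (ori os0 w t) t (w ! t) G L)"

fun gaps_ok :: "bool list \<Rightarrow> nat \<Rightarrow> elem \<Rightarrow> (nat \<times> nat \<Rightarrow> vec2) \<Rightarrow> bool" where
  "gaps_ok os t (Xing k ov) U = (\<forall>j\<le>length os. j \<noteq> k + 1 \<longrightarrow> U (t+1, j) = U (t, j))"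
| "gaps_ok os t (Birth k ob) U =
     (\<forall>j\<le>length os. (j \<le> k \<longrightarrow> U (t+1, j) = U (t, j)) \<and> (k \<le> j \<longrightarrow> U (t+1, j+2) = U (t, j)))"
| "gaps_ok os t (Death k) U =
     (\<forall>j\<le>length os. (j \<le> k \<longrightarrow> U (t+1, j) = U (t, j)) \<and> (k + 2 \<le> j \<longrightarrow> U (t+1, j-2) = U (t, j)))"

definition shadow_coloring :: "bool list \<Rightarrow> elem list \<Rightarrow> (nat \<times> nat \<Rightarrow> mat2) \<Rightarrow>
    (nat \<times> nat \<Rightarrow> vec2) \<Rightarrow> bool" where
  "shadow_coloring os0 w G U \<longleftrightarrow>
     (\<forall>t\<le>length w.
        (\<forall>j\<le>length (ori os0 w t). U (t, j) \<noteq> 0) \<and>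
        (\<forall>p<length (ori os0 w t).
           U (t, down_gap (ori os0 w t) p) = G (t, p) *v U (t, up_gap (ori os0 w t) p))) \<and>
     (\<forall>t<length w. gaps_ok (ori os0 w t) t (w ! t) U)"

definition admissible :: "bool list \<Rightarrow> elem list \<Rightarrow> (nat \<times> nat \<Rightarrow> vec2 set) \<Rightarrow>
    (nat \<times> nat \<Rightarrow> vec2) \<Rightarrow> bool" where
  "admissible os0 w L U \<longleftrightarrow>
     (\<forall>t\<le>length w.
        (\<forall>j\<le>length (ori os0 w t). det_cols (U (t, j)) e2 \<noteq> 0) \<and>
        (\<forall>p<length (ori os0 w t). \<forall>v\<in>L (t, p). v \<noteq> 0 \<longrightarrow>
           pair v e2 \<noteq> 0 \<and> pair v (U (t, up_gap (ori os0 w t) p)) \<noteq> 0))"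

end

theory Submission
  imports Defs
begin

lemma inv_props:
  fixes A :: mat2
  assumes "invertible A"
  shows "A ** matrix_inv A = mat 1" "matrix_inv A ** A = mat 1"
proof -
  have "\<exists>A'. A ** A' = mat 1 \<and> A' ** A = mat 1" using assms invertible_def by blast
  hence "A ** matrix_inv A = mat 1 \<and> matrix_inv A ** A = mat 1"
    unfolding matrix_inv_def by (rule someI_ex)
  thus "A ** matrix_inv A = mat 1" "matrix_inv A ** A = mat 1" by auto
qed

lemma inv_inv: fixes A :: mat2 assumes "invertible A" shows "invertible (matrix_inv A)"
  using inv_props[OF assms] invertible_def by blast

lemma SL2_inv: "g \<in> SL2 \<Longrightarrow> invertible g"
  by (simp add: SL2_def invertible_det_nz)

lemma cancel_right:
  fixes X Y M :: mat2
  assumes "invertible M" "X ** M = Z" "Y ** M = Z" shows "X = Y"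
proof -
  have "X = X ** M ** matrix_inv M" using inv_props[OF assms(1)] by (metis matrix_mul_assoc matrix_mul_rid)
  also have "\<dots> = Y ** M ** matrix_inv M" using assms by simp
  also have "\<dots> = Y" using inv_props[OF assms(1)] by (metis matrix_mul_assoc matrix_mul_rid)
  finally show ?thesis .
qed

lemma cancel_both:
  fixes X Y A B :: mat2
  assumes "invertible A" "invertible B" "A ** X ** B = Z" "A ** Y ** B = Z" shows "X = Y"
proof -
  have "X = matrix_inv A ** (A ** X ** B) ** matrix_inv B"
    using inv_props[OF assms(1)] inv_props[OF assms(2)] by (metis matrix_mul_assoc matrix_mul_rid matrix_mul_lid)
  also have "\<dots> = matrix_inv A ** (A ** Y ** B) ** matrix_inv B" using assms by simp
  also have "\<dots> = Y" using inv_props[OF assms(1)] inv_props[OF assms(2)]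
    by (metis matrix_mul_assoc matrix_mul_rid matrix_mul_lid)
  finally show ?thesis .
qed

lemma core_pos:
  fixes g1 g2 :: mat2 assumes "invertible g1"
  shows "g1 ** (matrix_inv g1 ** g2 ** g1) = g2 ** g1"
  using inv_props[OF assms] by (metis matrix_mul_assoc matrix_mul_lid)

lemma core_neg:
  fixes g1 g2 :: mat2 assumes "invertible g2"
  shows "(g2 ** g1 ** matrix_inv g2) ** g2 = g2 ** g1"
  using inv_props[OF assms] by (metis matrix_mul_assoc matrix_mul_rid)

lemma id_TT:
  fixes g1 g2 g1' g2' :: mat2
  assumes i: "invertible g1" "invertible g2" "invertible g1'" "invertible g2'"
    and c: "g1' ** g2' = g2 ** g1"
  shows "matrix_inv g2' ** matrix_inv g1' = matrix_inv g1 ** matrix_inv g2"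
proof (rule cancel_right[where M = "g2 ** g1" and Z = "mat 1"])
  show "invertible (g2 ** g1)" using i invertible_mult by blast
  show "matrix_inv g2' ** matrix_inv g1' ** (g2 ** g1) = mat 1"
    unfolding c[symmetric] using inv_props[OF i(3)] inv_props[OF i(4)]
    by (simp add: matrix_mul_assoc) (simp add: matrix_mul_assoc[symmetric])
  show "matrix_inv g1 ** matrix_inv g2 ** (g2 ** g1) = mat 1"
    using inv_props[OF i(1)] inv_props[OF i(2)]
    by (simp add: matrix_mul_assoc) (simp add: matrix_mul_assoc[symmetric])
qed

lemma id_TF:
  fixes g1 g2 g1' g2' :: mat2
  assumes i: "invertible g1" "invertible g2" "invertible g1'" "invertible g2'"
    and c: "g1' ** g2' = g2 ** g1"
  shows "g2' ** matrix_inv g1 = matrix_inv g1' ** g2"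
proof (rule cancel_both[where A = g1' and B = g1 and Z = "g2 ** g1"])
  show "invertible g1'" "invertible g1" using i by auto
  show "g1' ** (g2' ** matrix_inv g1) ** g1 = g2 ** g1"
    unfolding c[symmetric] using inv_props[OF i(1)]
    by (metis matrix_mul_assoc matrix_mul_lid matrix_mul_rid)
  show "g1' ** (matrix_inv g1' ** g2) ** g1 = g2 ** g1"
    using inv_props[OF i(3)]
    by (metis matrix_mul_assoc matrix_mul_lid matrix_mul_rid)
qed

lemma id_FT:
  fixes g1 g2 g1' g2' :: mat2
  assumes i: "invertible g1" "invertible g2" "invertible g1'" "invertible g2'"
    and c: "g1' ** g2' = g2 ** g1"
  shows "matrix_inv g2 ** g1' = g1 ** matrix_inv g2'"
proof (rule cancel_both[where A = g2 and B = g2' and Z = "g1' ** g2'"])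
  show "invertible g2" "invertible g2'" using i by auto
  show "g2 ** (matrix_inv g2 ** g1') ** g2' = g1' ** g2'"
    using inv_props[OF i(2)] by (metis matrix_mul_assoc matrix_mul_lid matrix_mul_rid)
  show "g2 ** (g1 ** matrix_inv g2') ** g2' = g1' ** g2'"
    unfolding c using inv_props[OF i(4)]
    by (metis matrix_mul_assoc matrix_mul_lid matrix_mul_rid)
qed


lemma ori_0: "ori os0 w 0 = os0" by (simp add: ori_def)
lemma ori_Suc: "t < length w \<Longrightarrow> ori os0 w (Suc t) = step (ori os0 w t) (w!t)"
  by (simp add: ori_def take_Suc_conv_app_nth)

definition Nm :: "(nat \<times> nat \<Rightarrow> mat2) \<Rightarrow> bool list \<Rightarrow> nat \<Rightarrow> nat \<Rightarrow> mat2" where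
  "Nm G os t p = (if os ! p then matrix_inv (G (t,p)) else G (t,p))"

primrec Pm :: "(nat \<times> nat \<Rightarrow> mat2) \<Rightarrow> bool list \<Rightarrow> nat \<Rightarrow> nat \<Rightarrow> mat2" where
  "Pm G os t 0 = mat 1"
| "Pm G os t (Suc j) = Nm G os t j ** Pm G os t j"

lemma Nm_inv: "invertible (G (t,p)) \<Longrightarrow> invertible (Nm G os t p)"
  by (simp add: Nm_def inv_inv)

lemma Pm_inv: "(\<And>p. p < j \<Longrightarrow> invertible (G (t,p))) \<Longrightarrow> invertible (Pm G os t j)"
proof (induction j)
  case 0 then show ?case unfolding invertible_def by (intro exI[of _ "mat 1"]) simp
next
  case (Suc j) then show ?case by (simp add: invertible_mult Nm_inv)
qed

lemma Pm_shift:
  assumes "Pm A a ta (m+d) = Pm B b tb m"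
    and "\<And>p. m \<le> p \<Longrightarrow> p < n \<Longrightarrow> Nm A a ta (p+d) = Nm B b tb p"
  shows "m \<le> j \<Longrightarrow> j \<le> n \<Longrightarrow> Pm A a ta (j+d) = Pm B b tb j"
proof (induction j)
  case 0 then show ?case using assms(1) by simp
next
  case (Suc j)
  show ?case
  proof (cases "m = Suc j")
    case True then show ?thesis using assms(1) by simp
  next
    case False
    then have "m \<le> j" using Suc.prems by simp
    then have "Pm A a ta (j+d) = Pm B b tb j" using Suc by simp
    moreover have "Nm A a ta (j+d) = Nm B b tb j" using assms(2) \<open>m \<le> j\<close> Suc.prems by simp
    ultimately show ?thesis by simp
  qed
qed

lemma Nm_pair_id:
  fixes g :: mat2
  assumes "invertible g" "a \<noteq> b"
  shows "(if b then matrix_inv g else g) ** (if a then matrix_inv g else g) = mat 1"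
  using inv_props[OF assms(1)] assms(2) by auto

lemma xing_case:
  assumes k: "k + 1 < length os"
    and os': "os' = os[k := os!(k+1), k+1 := os!k]"
    and ev: "event_ok os t (Xing k ov) G L"
    and inv: "\<And>p. p < length os \<Longrightarrow> invertible (G (t,p)) \<and> invertible (G (Suc t,p))"
  shows "\<forall>j\<le>length os. j \<noteq> k + 1 \<longrightarrow> Pm G os' (Suc t) j = Pm G os t j"
proof -
  have same: "\<And>p. p < length os \<Longrightarrow> p \<noteq> k \<Longrightarrow> p \<noteq> k+1 \<Longrightarrow> Nm G os' (Suc t) p = Nm G os t p"
    using ev unfolding os' by (auto simp: Nm_def)
  have lo: "\<And>j. j \<le> k \<Longrightarrow> Pm G os' (Suc t) j = Pm G os t j"
    using Pm_shift[where m=0 and d=0 and n=k and A=G and B=G and a=os' and b=os and ta="Suc t" and tb=t]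
      same k by simp
  have i4: "invertible (G (t,k))" "invertible (G (t,k+1))" "invertible (G (Suc t,k))"
    "invertible (G (Suc t,k+1))" using inv k by auto
  obtain s1 s2 s1' s2' where xs: "xing_segs t k (os!k) (os!(k+1)) = (s1,s2,s1',s2')"
    by (cases "xing_segs t k (os!k) (os!(k+1))") auto
  have sin: "s1 \<in> {(t,k),(t,k+1),(Suc t,k),(Suc t,k+1)}" "s2 \<in> {(t,k),(t,k+1),(Suc t,k),(Suc t,k+1)}"
    using xs unfolding xing_segs_def by (auto split: if_splits)
  have is1: "invertible (G s1)" "invertible (G s2)" using sin i4 by auto
  have core: "G s1' ** G s2' = G s2 ** G s1"
  proof (cases "xing_positive (os ! k) (os ! (k+1)) ov")
    case True
    then have "G s1' = G s1 \<and> G s2' = matrix_inv (G s1) ** G s2 ** G s1"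
      using ev xs by simp
    then show ?thesis using core_pos[OF is1(1)] by (simp add: matrix_mul_assoc)
  next
    case False
    then have "G s2' = G s2 \<and> G s1' = G s2 ** G s1 ** matrix_inv (G s2)"
      using ev xs by simp
    then show ?thesis using core_neg[OF is1(2)] by simp
  qed
  have o': "os' ! k = os ! (k+1)" "os' ! (k+1) = os ! k" using k os' by auto
  have N2: "Nm G os' (Suc t) (k+1) ** Nm G os' (Suc t) k = Nm G os t (k+1) ** Nm G os t k"
  proof (cases "os ! k"; cases "os ! (k+1)")
    assume a: "os ! k" and b: "os ! (k+1)"
    show ?thesis using xs core a b o' id_TT[OF i4(2) i4(1) i4(3) i4(4)]
      unfolding xing_segs_def Nm_def by auto
  next
    assume a: "os ! k" and b: "\<not> os ! (k+1)"
    show ?thesis using xs core a b o' id_TF[OF i4(1) i4(3) i4(4) i4(2)]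
      unfolding xing_segs_def Nm_def by auto
  next
    assume a: "\<not> os ! k" and b: "os ! (k+1)"
    show ?thesis using xs core a b o' id_FT[OF i4(4) i4(2) i4(1) i4(3)]
      unfolding xing_segs_def Nm_def by auto
  next
    assume a: "\<not> os ! k" and b: "\<not> os ! (k+1)"
    show ?thesis using xs core a b o'
      unfolding xing_segs_def Nm_def by auto
  qed
  have k2: "Pm G os' (Suc t) (k+2) = Pm G os t (k+2)"
    using lo[of k] N2 by (simp add: matrix_mul_assoc)
  have hi: "\<And>j. k + 2 \<le> j \<Longrightarrow> j \<le> length os \<Longrightarrow> Pm G os' (Suc t) j = Pm G os t j"
    using Pm_shift[where m="k+2" and d=0 and n="length os" and A=G and B=G and a=os' and b=os and ta="Suc t" and tb=t]
      same k2 by simp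
  show ?thesis
  proof (intro allI impI)
    fix j assume "j \<le> length os" "j \<noteq> k + 1"
    then show "Pm G os' (Suc t) j = Pm G os t j"
      using lo hi by (cases "j \<le> k") auto
  qed
qed


lemma birth_case:
  assumes k: "k \<le> length os"
    and os': "os' = take k os @ [ob, \<not> ob] @ drop k os"
    and ev: "event_ok os t (Birth k ob) G L"
    and inv: "invertible (G (Suc t, k))"
  shows "\<forall>j\<le>length os. (j \<le> k \<longrightarrow> Pm G os' (Suc t) j = Pm G os t j) \<and>
                        (k \<le> j \<longrightarrow> Pm G os' (Suc t) (j+2) = Pm G os t j)"
proof -
  have lo1: "\<And>p. p < k \<Longrightarrow> Nm G os' (Suc t) p = Nm G os t p"
    using ev k unfolding os' by (auto simp: Nm_def nth_append)
  have lo: "\<And>j. j \<le> k \<Longrightarrow> Pm G os' (Suc t) j = Pm G os t j"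
    using Pm_shift[where m=0 and d=0 and n=k and A=G and B=G and a=os' and b=os and ta="Suc t" and tb=t]
      lo1 by simp
  have hi1: "\<And>p. k \<le> p \<Longrightarrow> p < length os \<Longrightarrow> Nm G os' (Suc t) (p+2) = Nm G os t p"
    using ev k unfolding os' by (auto simp: Nm_def nth_append)
  have o': "os' ! k = ob" "os' ! (k+1) = (\<not> ob)" using k os' by (auto simp: nth_append)
  have "Nm G os' (Suc t) (k+1) ** Nm G os' (Suc t) k = mat 1"
    using Nm_pair_id[OF inv, of ob "\<not> ob"] o' ev unfolding Nm_def by auto
  then have k2: "Pm G os' (Suc t) (k+2) = Pm G os t k"
    using lo[of k] by (simp add: matrix_mul_assoc)
  have hi: "\<And>j. k \<le> j \<Longrightarrow> j \<le> length os \<Longrightarrow> Pm G os' (Suc t) (j+2) = Pm G os t j"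
    using Pm_shift[where m="k" and d=2 and n="length os" and A=G and B=G and a=os' and b=os and ta="Suc t" and tb=t]
      hi1 k2 by simp
  show ?thesis using lo hi by auto
qed

lemma death_case:
  assumes k: "k + 1 < length os" and ne: "os ! k \<noteq> os ! (k+1)"
    and os': "os' = take k os @ drop (k+2) os"
    and ev: "event_ok os t (Death k) G L"
    and inv: "invertible (G (t, k))"
  shows "\<forall>j\<le>length os. (j \<le> k \<longrightarrow> Pm G os' (Suc t) j = Pm G os t j) \<and>
                        (k + 2 \<le> j \<longrightarrow> Pm G os' (Suc t) (j-2) = Pm G os t j)"
proof -
  have lo1: "\<And>p. p < k \<Longrightarrow> Nm G os' (Suc t) p = Nm G os t p"
    using ev k unfolding os' by (auto simp: Nm_def nth_append)
  have lo: "\<And>j. j \<le> k \<Longrightarrow> Pm G os' (Suc t) j = Pm G os t j"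
    using Pm_shift[where m=0 and d=0 and n=k and A=G and B=G and a=os' and b=os and ta="Suc t" and tb=t]
      lo1 by simp
  have hi1: "\<And>p. k \<le> p \<Longrightarrow> p < length os - 2 \<Longrightarrow> Nm G os t (p+2) = Nm G os' (Suc t) p"
  proof -
    fix p assume p: "k \<le> p" "p < length os - 2"
    have "G (Suc t, p + 2 - 2) = G (t, p+2)"
    proof -
      have "\<forall>q<length os. k + 2 \<le> q \<longrightarrow> G (Suc t, q - 2) = G (t, q)" using ev by simp
      then show ?thesis using p by (metis add_le_mono1 less_diff_conv)
    qed
    moreover have "os' ! p = os ! (p+2)"
      using p k unfolding os' by (auto simp: nth_append)
    ultimately show "Nm G os t (p+2) = Nm G os' (Suc t) p" by (simp add: Nm_def)
  qed
  have "Nm G os t (k+1) ** Nm G os t k = mat 1"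
    using Nm_pair_id[OF inv, of "os!k" "os!(k+1)"] ne ev unfolding Nm_def by auto
  then have k2: "Pm G os t (k+2) = Pm G os' (Suc t) k"
    using lo[of k] by (simp add: matrix_mul_assoc)
  have hi: "\<And>j. k \<le> j \<Longrightarrow> j \<le> length os - 2 \<Longrightarrow> Pm G os t (j+2) = Pm G os' (Suc t) j"
    using Pm_shift[where m="k" and d=2 and n="length os - 2" and A=G and B=G and a=os and b=os' and ta=t and tb="Suc t"]
      hi1 k2 by simp
  show ?thesis
  proof (intro allI impI conjI)
    fix j assume "j \<le> length os" "j \<le> k" then show "Pm G os' (Suc t) j = Pm G os t j" using lo by simp
  next
    fix j assume "j \<le> length os" "k + 2 \<le> j"
    then have "j - 2 + 2 = j" "k \<le> j - 2" "j - 2 \<le> length os - 2" by auto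
    then show "Pm G os' (Suc t) (j-2) = Pm G os t j" using hi[of "j-2"] by metis
  qed
qed


lemma inv_nz: fixes M :: mat2 assumes "invertible M" "u \<noteq> 0" shows "M *v u \<noteq> 0"
  using inj_matrix_vector_mult[OF assms(1)] assms(2) by (metis injD matrix_vector_mult_0_right)

lemma shadow_exists:
  assumes wf: "wf_diagram os0 w" and dc: "decorated_coloring os0 w G L" and u0: "u0 \<noteq> 0"
  shows "shadow_coloring os0 w G (\<lambda>s. Pm G (ori os0 w (fst s)) (fst s) (snd s) *v u0)"
proof -
  have Ginv: "\<And>t p. t \<le> length w \<Longrightarrow> p < length (ori os0 w t) \<Longrightarrow> invertible (G (t,p))"
    using dc SL2_inv unfolding decorated_coloring_def by blast
  have evs: "\<And>t. t < length w \<Longrightarrow> event_ok (ori os0 w t) t (w ! t) G L"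
    using dc unfolding decorated_coloring_def by blast
  have val: "\<And>t. t < length w \<Longrightarrow> valid_elem (ori os0 w t) (w ! t)"
    using wf unfolding wf_diagram_def by blast
  show ?thesis
    unfolding shadow_coloring_def
  proof (intro conjI allI impI)
    fix t j assume t: "t \<le> length w" and j: "j \<le> length (ori os0 w t)"
    show "Pm G (ori os0 w (fst (t, j))) (fst (t, j)) (snd (t, j)) *v u0 \<noteq> 0"
      using inv_nz[OF Pm_inv u0] Ginv t j by simp
  next
    fix t p assume t: "t \<le> length w" and p: "p < length (ori os0 w t)"
    let ?os = "ori os0 w t"
    have gi: "invertible (G (t,p))" using Ginv t p by simp
    show "Pm G (ori os0 w (fst (t, down_gap ?os p))) (fst (t, down_gap ?os p)) (snd (t, down_gap ?os p)) *v u0 =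
       G (t, p) *v (Pm G (ori os0 w (fst (t, up_gap ?os p))) (fst (t, up_gap ?os p)) (snd (t, up_gap ?os p)) *v u0)"
      using inv_props[OF gi]
      by (simp add: down_gap_def up_gap_def Nm_def matrix_vector_mul_assoc matrix_mul_assoc)
  next
    fix t assume t: "t < length w"
    let ?os = "ori os0 w t"
    have os': "ori os0 w (Suc t) = step ?os (w!t)" using ori_Suc t by simp
    have ev: "event_ok ?os t (w ! t) G L" using evs t by simp
    have va: "valid_elem ?os (w ! t)" using val t by simp
    show "gaps_ok ?os t (w ! t) (\<lambda>s. Pm G (ori os0 w (fst s)) (fst s) (snd s) *v u0)"
    proof (cases "w ! t")
      case (Xing k ov)
      have len: "length (ori os0 w (Suc t)) = length ?os" using os' Xing by simp
      have "\<forall>j\<le>length ?os. j \<noteq> k + 1 \<longrightarrow> Pm G (ori os0 w (Suc t)) (Suc t) j = Pm G ?os t j"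
        apply (rule xing_case[where ov=ov and L=L])
        using va ev os' Xing Ginv t len by auto
      then show ?thesis using Xing by simp
    next
      case (Birth k ob)
      have len: "length (ori os0 w (Suc t)) = length ?os + 2" using os' Birth va by simp
      have "\<forall>j\<le>length ?os. (j \<le> k \<longrightarrow> Pm G (ori os0 w (Suc t)) (Suc t) j = Pm G ?os t j) \<and>
                        (k \<le> j \<longrightarrow> Pm G (ori os0 w (Suc t)) (Suc t) (j+2) = Pm G ?os t j)"
        apply (rule birth_case[where ob=ob and L=L])
        using va ev os' Birth Ginv[of "Suc t" k] t len by auto
      then show ?thesis using Birth by simp
    next
      case (Death k)
      have "\<forall>j\<le>length ?os. (j \<le> k \<longrightarrow> Pm G (ori os0 w (Suc t)) (Suc t) j = Pm G ?os t j) \<and>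
                        (k + 2 \<le> j \<longrightarrow> Pm G (ori os0 w (Suc t)) (Suc t) (j-2) = Pm G ?os t j)"
        apply (rule death_case[where L=L])
        using va ev os' Death Ginv[of t k] t by auto
      then show ?thesis using Death by simp
    qed
  qed
qed


lemma shadow_conj:
  assumes sc: "shadow_coloring os0 w G U" and h: "invertible h"
  shows "shadow_coloring os0 w (\<lambda>s. matrix_inv h ** G s ** h) (\<lambda>s. matrix_inv h *v U s)"
  unfolding shadow_coloring_def
proof (intro conjI allI impI)
  fix t j assume "t \<le> length w" "j \<le> length (ori os0 w t)"
  then show "matrix_inv h *v U (t, j) \<noteq> 0"
    using sc inv_nz[OF inv_inv[OF h]] unfolding shadow_coloring_def by blast
next
  fix t p assume "t \<le> length w" "p < length (ori os0 w t)"
  then have e: "U (t, down_gap (ori os0 w t) p) = G (t, p) *v U (t, up_gap (ori os0 w t) p)"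
    using sc unfolding shadow_coloring_def by blast
  have "(matrix_inv h ** G (t, p) ** h) *v (matrix_inv h *v U (t, up_gap (ori os0 w t) p))
      = (matrix_inv h ** G (t, p) ** (h ** matrix_inv h)) *v U (t, up_gap (ori os0 w t) p)"
    by (simp add: matrix_vector_mul_assoc matrix_mul_assoc)
  also have "\<dots> = matrix_inv h *v (G (t, p) *v U (t, up_gap (ori os0 w t) p))"
    using inv_props[OF h] by (simp add: matrix_vector_mul_assoc)
  finally show "matrix_inv h *v U (t, down_gap (ori os0 w t) p) =
       (matrix_inv h ** G (t, p) ** h) *v (matrix_inv h *v U (t, up_gap (ori os0 w t) p))"
    using e by simp
next
  fix t assume t: "t < length w"
  then have g: "gaps_ok (ori os0 w t) t (w ! t) U" using sc unfolding shadow_coloring_def by blast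
  then show "gaps_ok (ori os0 w t) t (w ! t) (\<lambda>s. matrix_inv h *v U s)"
    by (cases "w ! t") auto
qed

lemma avoid:
  assumes "finite S" "(0,0) \<notin> S"
  shows "\<exists>z::complex. \<forall>(a,b)\<in>S. a + b * z \<noteq> 0"
proof -
  have "finite ((\<lambda>(a,b). - a / b) ` S)" using assms(1) by simp
  then obtain z where z: "z \<notin> (\<lambda>(a,b). - a / b) ` S"
    using ex_new_if_finite[OF infinite_UNIV_char_0] by blast
  have "a + b * z \<noteq> 0" if ab: "(a,b) \<in> S" for a b
  proof (cases "b = 0")
    case True then show ?thesis using ab assms(2) by auto
  next
    case False
    show ?thesis
    proof
      assume "a + b * z = 0"
      then have "z = - a / b" using False by (simp add: field_simps add_eq_0_iff)
      then show False using z ab by force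
    qed
  qed
  then show ?thesis by blast
qed

lemma pair_assoc: "pair v (M *v u) = pair (v v* M) u"
  unfolding pair_def by (simp add: sum_2 vector_matrix_mult_def matrix_vector_mult_def algebra_simps)

lemma pair_scale: "pair (c *s v) u = c * pair v u"
  unfolding pair_def by (simp add: sum_2 algebra_simps)

lemma det_cols_e2: "det_cols x e2 = x $ 1"
  unfolding det_cols_def e2_def by (simp add: det_2)

lemma pair_e2: "pair v e2 = v $ 2"
  unfolding pair_def e2_def by (simp add: sum_2)

definition hmat :: "complex \<Rightarrow> mat2" where
  "hmat z = (\<chi> i j. if i = j then 1 else if i = 1 then z else 0)"

lemma hmat_mult: "hmat z ** hmat (-z) = mat 1" "hmat (-z) ** hmat z = mat 1"
  unfolding hmat_def by (simp_all add: vec_eq_iff forall_2 sum_2 matrix_matrix_mult_def mat_def)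

lemma hmat_inv: "invertible (hmat z)" "matrix_inv (hmat z) = hmat (-z)"
proof -
  show hi: "invertible (hmat z)" using hmat_mult invertible_def by blast
  have "matrix_inv (hmat z) = matrix_inv (hmat z) ** (hmat z ** hmat (-z))"
    using hmat_mult by simp
  also have "\<dots> = hmat (-z)" using inv_props[OF hi] by (simp add: matrix_mul_assoc)
  finally show "matrix_inv (hmat z) = hmat (-z)" .
qed

lemma hmat_SL2: "hmat z \<in> SL2"
  unfolding SL2_def hmat_def by (simp add: det_2)

lemma hmat_v1: "(hmat (-z) *v x) $ 1 = x $ 1 + (- x $ 2) * z"
  unfolding hmat_def by (simp add: matrix_vector_mult_def sum_2)

lemma hmat_v2: "(v v* hmat z) $ 2 = v $ 2 + v $ 1 * z"
  unfolding hmat_def by (simp add: vector_matrix_mult_def sum_2)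


theorem theoremB:
  fixes os0 :: "bool list" and w :: "elem list"
    and G :: "nat \<times> nat \<Rightarrow> mat2" and L :: "nat \<times> nat \<Rightarrow> vec2 set"
  assumes "wf_diagram os0 w"
    and "decorated_coloring os0 w G L"
  shows "\<exists>h\<in>SL2. \<exists>U.
           shadow_coloring os0 w (\<lambda>s. matrix_inv h ** G s ** h) U \<and>
           admissible os0 w (\<lambda>s. line_act (L s) h) U"
proof -
  note wf = assms(1) and dc = assms(2)
  have Ginv: "\<And>t p. t \<le> length w \<Longrightarrow> p < length (ori os0 w t) \<Longrightarrow> invertible (G (t,p))"
    using dc SL2_inv unfolding decorated_coloring_def by blast
  define v0 where "v0 t p = (SOME v. v \<noteq> 0 \<and> L (t,p) = {c *s v | c. True})" for t p
  have v0: "v0 t p \<noteq> 0 \<and> L (t,p) = {c *s v0 t p | c. True}"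
    if "t \<le> length w" "p < length (ori os0 w t)" for t p
  proof -
    have "is_line (L (t,p))" using dc that unfolding decorated_coloring_def by blast
    then have "\<exists>v. v \<noteq> 0 \<and> L (t,p) = {c *s v | c. True}" unfolding is_line_def by blast
    then show ?thesis unfolding v0_def by (rule someI_ex)
  qed
  define P where "P t j = Pm G (ori os0 w t) t j" for t j
  have Pinv: "invertible (P t j)" if "t \<le> length w" "j \<le> length (ori os0 w t)" for t j
    unfolding P_def using Pm_inv Ginv that by (meson order_less_le_trans)
  define Q where "Q = Sigma {..length w} (\<lambda>t. {..<length (ori os0 w t)})"
  define T where "T = Sigma {..length w} (\<lambda>t. {..length (ori os0 w t)})"
  have fQ: "finite Q" and fT: "finite T" unfolding Q_def T_def by auto
  define r where "r t p = v0 t p v* P t (up_gap (ori os0 w t) p)" for t p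
  have up_le: "up_gap (ori os0 w t) p \<le> length (ori os0 w t)" if "p < length (ori os0 w t)" for t p
    using that by (simp add: up_gap_def)
  have rnz: "r t p \<noteq> 0" if "(t,p) \<in> Q" for t p
  proof
    assume r0: "r t p = 0"
    have t: "t \<le> length w" and p: "p < length (ori os0 w t)" using that by (auto simp: Q_def)
    let ?M = "P t (up_gap (ori os0 w t) p)"
    have Mi: "invertible ?M" using Pinv t up_le[OF p] by simp
    have "v0 t p = v0 t p v* (?M ** matrix_inv ?M)" using inv_props[OF Mi] by simp
    also have "\<dots> = r t p v* matrix_inv ?M" by (simp add: r_def vector_matrix_mul_assoc)
    also have "\<dots> = 0" using r0 by (simp add: vec_eq_iff vector_matrix_mult_def)
    finally show False using v0[OF t p] by simp
  qed
  have "\<exists>z1::complex. \<forall>(a,b)\<in>(\<lambda>(t,p). (r t p $ 1, r t p $ 2)) ` Q. a + b * z1 \<noteq> 0"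
  proof (rule avoid)
    show "finite ((\<lambda>(t,p). (r t p $ 1, r t p $ 2)) ` Q)" using fQ by simp
    show "(0,0) \<notin> (\<lambda>(t,p). (r t p $ 1, r t p $ 2)) ` Q"
      using rnz by (force simp: vec_eq_iff forall_2)
  qed
  then obtain z1 :: complex where z1: "\<And>t p. (t,p) \<in> Q \<Longrightarrow> r t p $ 1 + r t p $ 2 * z1 \<noteq> 0"
    by fastforce
  define u0 :: vec2 where "u0 = (\<chi> i. if i = 1 then 1 else z1)"
  have u0nz: "u0 \<noteq> 0" by (simp add: u0_def vec_eq_iff forall_2)
  have pu: "pair (v0 t p) (P t (up_gap (ori os0 w t) p) *v u0) \<noteq> 0" if "(t,p) \<in> Q" for t p
  proof -
    have "pair (v0 t p) (P t (up_gap (ori os0 w t) p) *v u0) = pair (r t p) u0"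
      by (simp add: pair_assoc r_def)
    also have "\<dots> = r t p $ 1 + r t p $ 2 * z1"
      by (simp add: pair_def sum_2 u0_def)
    finally show ?thesis using z1[OF that] by simp
  qed
  define U where "U s = P (fst s) (snd s) *v u0" for s
  have sc: "shadow_coloring os0 w G U"
    unfolding U_def P_def by (rule shadow_exists[OF wf dc u0nz])
  have Unz: "U s \<noteq> 0" if "s \<in> T" for s
    using that Pinv inv_nz[OF _ u0nz] unfolding T_def U_def by auto
  have "\<exists>z::complex. \<forall>(a,b)\<in>(\<lambda>s. (U s $ 1, - U s $ 2)) ` T \<union> (\<lambda>(t,p). (v0 t p $ 2, v0 t p $ 1)) ` Q.
          a + b * z \<noteq> 0"
  proof (rule avoid)
    show "finite ((\<lambda>s. (U s $ 1, - U s $ 2)) ` T \<union> (\<lambda>(t,p). (v0 t p $ 2, v0 t p $ 1)) ` Q)"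
      using fQ fT by simp
    have "(0,0) \<notin> (\<lambda>s. (U s $ 1, - U s $ 2)) ` T" using Unz by (force simp: vec_eq_iff forall_2)
    moreover have "(0,0) \<notin> (\<lambda>(t,p). (v0 t p $ 2, v0 t p $ 1)) ` Q"
      using v0 by (force simp: vec_eq_iff forall_2 Q_def)
    ultimately show "(0,0) \<notin> (\<lambda>s. (U s $ 1, - U s $ 2)) ` T \<union> (\<lambda>(t,p). (v0 t p $ 2, v0 t p $ 1)) ` Q"
      by blast
  qed
  then obtain z :: complex where
    zT: "\<And>s. s \<in> T \<Longrightarrow> U s $ 1 + (- U s $ 2) * z \<noteq> 0" and
    zQ: "\<And>t p. (t,p) \<in> Q \<Longrightarrow> v0 t p $ 2 + v0 t p $ 1 * z \<noteq> 0"
    by fastforce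
  show ?thesis
  proof (intro bexI exI conjI)
    show "hmat z \<in> SL2" by (rule hmat_SL2)
    show "shadow_coloring os0 w (\<lambda>s. matrix_inv (hmat z) ** G s ** hmat z) (\<lambda>s. hmat (-z) *v U s)"
      using shadow_conj[OF sc hmat_inv(1)[of z]] unfolding hmat_inv(2) .
    show "admissible os0 w (\<lambda>s. line_act (L s) (hmat z)) (\<lambda>s. hmat (-z) *v U s)"
      unfolding admissible_def
    proof (intro allI impI conjI ballI)
      fix t j assume "t \<le> length w" "j \<le> length (ori os0 w t)"
      then have "(t,j) \<in> T" by (simp add: T_def)
      then show "det_cols (hmat (-z) *v U (t, j)) e2 \<noteq> 0"
        using zT by (simp add: det_cols_e2 hmat_v1)
    next
      fix t p v assume t: "t \<le> length w" and p: "p < length (ori os0 w t)"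
        and v: "v \<in> line_act (L (t, p)) (hmat z)" and vnz: "v \<noteq> 0"
      have tp: "(t,p) \<in> Q" using t p by (simp add: Q_def)
      obtain c where c: "v = (c *s v0 t p) v* hmat z"
        using v v0[OF t p] unfolding line_act_def by auto
      have cnz: "c \<noteq> 0" using vnz c by (auto simp: vec_eq_iff vector_matrix_mult_def)
      have "pair v e2 = c * (v0 t p $ 2 + v0 t p $ 1 * z)"
        using c by (simp add: pair_e2 hmat_v2 algebra_simps)
      then show "pair v e2 \<noteq> 0" using cnz zQ[OF tp] by simp
      have "pair v (hmat (-z) *v U (t, up_gap (ori os0 w t) p))
          = pair ((c *s v0 t p) v* (hmat z ** hmat (-z))) (U (t, up_gap (ori os0 w t) p))"
        by (simp add: c pair_assoc vector_matrix_mul_assoc)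
      also have "\<dots> = c * pair (v0 t p) (P t (up_gap (ori os0 w t) p) *v u0)"
        by (simp add: hmat_mult pair_scale U_def)
      finally show "pair v (hmat (-z) *v U (t, up_gap (ori os0 w t) p)) \<noteq> 0"
        using cnz pu[OF tp] by simp
    qed
  qed
qed

end
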